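(* Let $g$, $r_c$ and the global frame $\vec E$ be as in the context. Let $(s,\vec r)$ be a molecule with $N$ atoms and pairwise distinct positions. If there exist $\vec t\in\mathbb{R}^{1\times3}$ and $o\in\mathrm{O}(3)$ with $o\neq I$ such that $$\{(s_i,\vec r_i-\vec t): i=1,\dots,N\}=\{(s_i,(\vec r_i-\vec t)o^T): i=1,\dots,N\},$$ then $\mathrm{rank}(\vec E(s,\vec r))<3$.
   Context: $s\in\mathbb{R}^{N\times d}$ and $\vec r\in\mathbb{R}^{N\times3}$ have rows $s_i$ and $\vec r_i\in\mathbb{R}^{1\times 3}$. $\mathrm{O}(3)=\{Q\in\mathbb{R}^{3\times3}:QQ^T=I\}$. A local environment is a finite set of pairs $(s',x)$ with $s'\in\mathbb{R}^d$, $x\in\mathbb{R}^{1\times 3}$. $g$ is a function from local environments to $\mathbb{R}^{F\times 3}$ with $g(\{(s',xo^T):(s',x)\in A\})=g(A)o^T$ for all $o\in\mathrm{O}(3)$ and all $A$. With cutoff $r_c>0$, the local frames are $\vec E_i(s,\vec r)=g(\{(s_j,\vec r_i-\vec r_j): \|\vec r_i-\vec r_j\|<r_c\})$ and the global frame is $\vec E(s,\vec r)=\sum_{i=1}^N\vec E_i(s,\vec r)$. *)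

theory Defs
  imports "HOL-Analysis.Analysis"
begin

text \<open>Atoms are indexed by 0..N-1; s i is the feature row s_i in R^d (type real^'d),
 r i is the position row r_i in R^{1x3} (type real^3). A frame value in R^{F x 3}
 is a matrix of type real^3^'f (F rows, 3 columns). For a row vector x and a
 3x3 matrix o, the row vector x o^T is (Q *v x); for a matrix E, E o^T is E ** transpose o.\<close>

definition local_env :: "real \<Rightarrow> nat \<Rightarrow> (nat \<Rightarrow> real^'d) \<Rightarrow> (nat \<Rightarrow> real^3) \<Rightarrow> nat
    \<Rightarrow> ((real^'d) \<times> (real^3)) set" where
  "local_env rc N s r i = {(s j, r i - r j) | j. j < N \<and> norm (r i - r j) < rc}"

definition local_frame ::
  "(((real^'d) \<times> (real^3)) set \<Rightarrow> real^3^'f) \<Rightarrow> real \<Rightarrow> nat \<Rightarrow> (nat \<Rightarrow> real^'d)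
     \<Rightarrow> (nat \<Rightarrow> real^3) \<Rightarrow> nat \<Rightarrow> real^3^'f" where
  "local_frame g rc N s r i = g (local_env rc N s r i)"

definition global_frame ::
  "(((real^'d) \<times> (real^3)) set \<Rightarrow> real^3^'f) \<Rightarrow> real \<Rightarrow> nat \<Rightarrow> (nat \<Rightarrow> real^'d)
     \<Rightarrow> (nat \<Rightarrow> real^3) \<Rightarrow> real^3^'f" where
  "global_frame g rc N s r = (\<Sum>i<N. local_frame g rc N s r i)"

definition O3_equivariant :: "(((real^'d) \<times> (real^3)) set \<Rightarrow> real^3^'f) \<Rightarrow> bool" where
  "O3_equivariant g \<longleftrightarrow>
     (\<forall>Q A. orthogonal_matrix (Q :: real^3^3) \<and> finite A \<longrightarrow>
        g ((\<lambda>(s', x). (s', Q *v x)) ` A) = g A ** transpose Q)"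

end

theory Submission
  imports Defs
begin

lemma orth_norm:
  assumes "orthogonal_matrix (Q::real^3^3)"
  shows "norm (Q *v x) = norm x"
  using assms orthogonal_transformation_matrix[of "(*v) Q"]
  by (simp add: orthogonal_transformation matrix_vector_mul_linear)

lemma orth_inj:
  assumes "orthogonal_matrix (Q::real^3^3)" "Q *v x = Q *v y"
  shows "x = y"
proof -
  have "norm (Q *v (x - y)) = 0" using assms by (simp add: matrix_vector_mult_diff_distrib)
  then show ?thesis using orth_norm[OF assms(1)] by simp
qed

lemma row_mul_transpose:
  fixes E :: "real^3^'f" and Q :: "real^3^3"
  shows "(E ** transpose Q) $ k = Q *v (E $ k)"
  by (simp add: matrix_matrix_mult_def matrix_vector_mult_def transpose_def vec_eq_iff mult.commute)

lemma sum_mmul: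
  fixes B :: "real^3^3" and F :: "nat \<Rightarrow> real^3^'f"
  shows "(\<Sum>i<N. F i ** B) = (\<Sum>i<N. F i) ** B"
  by (induction N) (simp_all add: matrix_add_ldistrib matrix_matrix_mult_def vec_eq_iff sum.distrib algebra_simps)

theorem proposition10:
  fixes g :: "((real^'d) \<times> (real^3)) set \<Rightarrow> real^3^'f"
    and rc :: real and N :: nat
    and s :: "nat \<Rightarrow> real^'d" and r :: "nat \<Rightarrow> real^3"
    and t :: "real^3" and Q :: "real^3^3"
  assumes "O3_equivariant g"
    and "rc > 0"
    and "inj_on r {..<N}"
    and "orthogonal_matrix Q" and "Q \<noteq> mat 1"
    and "{(s i, r i - t) | i. i < N} = {(s i, Q *v (r i - t)) | i. i < N}"
  shows "rank (global_frame g rc N s r) < 3"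
proof -
  note eq = assms(6)
  have ex: "\<exists>j. j < N \<and> s j = s i \<and> r j - t = Q *v (r i - t)" if "i < N" for i
  proof -
    have "(s i, Q *v (r i - t)) \<in> {(s i, Q *v (r i - t)) | i. i < N}" using that by blast
    then have "(s i, Q *v (r i - t)) \<in> {(s i, r i - t) | i. i < N}" using eq by simp
    then show ?thesis by auto
  qed
  define \<sigma> where "\<sigma> i = (SOME j. j < N \<and> s j = s i \<and> r j - t = Q *v (r i - t))" for i
  have \<sigma>: "\<sigma> i < N \<and> s (\<sigma> i) = s i \<and> r (\<sigma> i) - t = Q *v (r i - t)" if "i < N" for i
    unfolding \<sigma>_def by (rule someI_ex[OF ex[OF that]])
  have inj: "inj_on \<sigma> {..<N}"
  proof (rule inj_onI)
    fix i k assume "i \<in> {..<N}" "k \<in> {..<N}" "\<sigma> i = \<sigma> k"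
    then have "Q *v (r i - t) = Q *v (r k - t)" using \<sigma> by (metis lessThan_iff)
    then have "r i - t = r k - t" using orth_inj[OF assms(4)] by blast
    then show "i = k" using assms(3) \<open>i \<in> _\<close> \<open>k \<in> _\<close> by (auto dest: inj_onD)
  qed
  have img: "\<sigma> ` {..<N} = {..<N}"
    using inj \<sigma> by (intro endo_inj_surj) auto
  have diff: "r (\<sigma> i) - r (\<sigma> k) = Q *v (r i - r k)" if "i < N" "k < N" for i k
  proof -
    have "r (\<sigma> i) - r (\<sigma> k) = (r (\<sigma> i) - t) - (r (\<sigma> k) - t)" by simp
    also have "\<dots> = Q *v (r i - t) - Q *v (r k - t)" using \<sigma> that by simp
    also have "\<dots> = Q *v (r i - r k)" by (simp add: matrix_vector_mult_diff_distrib[symmetric])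
    finally show ?thesis .
  qed
  have env: "local_env rc N s r (\<sigma> i) = (\<lambda>(s', x). (s', Q *v x)) ` local_env rc N s r i"
    if "i < N" for i
  proof -
    have "local_env rc N s r (\<sigma> i) = {(s (\<sigma> k), r (\<sigma> i) - r (\<sigma> k)) | k. k < N \<and> norm (r (\<sigma> i) - r (\<sigma> k)) < rc}"
      unfolding local_env_def
    proof (intro set_eqI iffI)
      fix p assume "p \<in> {(s j, r (\<sigma> i) - r j) | j. j < N \<and> norm (r (\<sigma> i) - r j) < rc}"
      then obtain j where j: "p = (s j, r (\<sigma> i) - r j)" "j < N" "norm (r (\<sigma> i) - r j) < rc" by blast
      then obtain k where "k < N" "\<sigma> k = j" using img by (metis imageE lessThan_iff)
      then show "p \<in> {(s (\<sigma> k), r (\<sigma> i) - r (\<sigma> k)) | k. k < N \<and> norm (r (\<sigma> i) - r (\<sigma> k)) < rc}"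
        using j by blast
    next
      fix p assume "p \<in> {(s (\<sigma> k), r (\<sigma> i) - r (\<sigma> k)) | k. k < N \<and> norm (r (\<sigma> i) - r (\<sigma> k)) < rc}"
      then show "p \<in> {(s j, r (\<sigma> i) - r j) | j. j < N \<and> norm (r (\<sigma> i) - r j) < rc}"
        using \<sigma> by blast
    qed
    also have "\<dots> = {(s k, Q *v (r i - r k)) | k. k < N \<and> norm (r i - r k) < rc}"
      using \<sigma> diff that orth_norm[OF assms(4)] by (metis (no_types, opaque_lifting))
    also have "\<dots> = (\<lambda>(s', x). (s', Q *v x)) ` local_env rc N s r i"
      unfolding local_env_def by auto
    finally show ?thesis .
  qed
  have fin: "finite (local_env rc N s r i)" for i
  proof -
    have "local_env rc N s r i \<subseteq> (\<lambda>j. (s j, r i - r j)) ` {..<N}"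
      unfolding local_env_def by auto
    then show ?thesis by (rule finite_subset) auto
  qed
  have lf: "local_frame g rc N s r (\<sigma> i) = local_frame g rc N s r i ** transpose Q" if "i < N" for i
    using assms(1) assms(4) fin env[OF that] unfolding local_frame_def O3_equivariant_def by simp
  define E where "E = global_frame g rc N s r"
  have "E = (\<Sum>i<N. local_frame g rc N s r (\<sigma> i))"
    unfolding E_def global_frame_def
    using sum.reindex[OF inj, of "local_frame g rc N s r"] img by simp
  also have "\<dots> = (\<Sum>i<N. local_frame g rc N s r i ** transpose Q)"
    using lf by simp
  also have "\<dots> = E ** transpose Q"
    unfolding E_def global_frame_def by (rule sum_mmul)
  finally have EQ: "E = E ** transpose Q" .
  define S where "S = {v :: real^3. Q *v v = v}"
  have subS: "rows E \<subseteq> S"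
    unfolding rows_def row_def S_def
    using EQ row_mul_transpose[of E Q] by (auto simp: vec_lambda_eta)
  have subsp: "subspace S"
    unfolding S_def subspace_def by (simp add: matrix_vector_right_distrib matrix_vector_mult_scaleR)
  have "S \<noteq> UNIV"
  proof
    assume "S = UNIV"
    then have "Q *v x = mat 1 *v x" for x unfolding S_def by auto
    then have "Q = mat 1" by (rule matrix_eq[THEN iffD2, rule_format]) 
    then show False using assms(5) by simp
  qed
  moreover have "span S = S" using subsp by (simp add: span_eq_iff)
  ultimately have "dim S \<noteq> DIM(real^3)" using dim_eq_full[of S] by metis
  moreover have "dim S \<le> DIM(real^3)" by (rule dim_subset_UNIV)
  moreover have "DIM(real^3) = 3" by simp
  ultimately have "dim S < 3" by linarith
  moreover have "dim (rows E) \<le> dim S" using subS by (rule dim_subset)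
  ultimately show ?thesis unfolding E_def[symmetric] row_rank_def by simp
qed

end
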